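(* Let $\pi,\tau\in\mathfrak{S}_m$. If $\mathcal{O}_\pi=\mathcal{O}_\tau$ and, for all $i\in\mathcal{O}_\pi$, we have $\{\pi_1,\dots,\pi_{m-i}\}=\{\tau_1,\dots,\tau_{m-i}\}$ and $\{\pi_{i+1},\dots,\pi_m\}=\{\tau_{i+1},\dots,\tau_m\}$, then $\pi$ and $\tau$ are super-strongly c-Wilf equivalent.
   Context: $\mathfrak{S}_n$ is the symmetric group on $[n]$, permutations written $\sigma=\sigma_1\cdots\sigma_n$. The standardization $\operatorname{st}(w)$ of a word of distinct integers replaces its smallest entry by 1, the next smallest by 2, etc. For $\pi\in\mathfrak{S}_m$ and $\sigma\in\mathfrak{S}_n$, $\operatorname{Em}(\pi,\sigma)=\{i\in[n-m+1]:\operatorname{st}(\sigma_i\cdots\sigma_{i+m-1})=\pi\}$. For a set $S$ of positive integers, $a^\pi_{n,S}$ is the number of $\sigma\in\mathfrak{S}_n$ with $\operatorname{Em}(\pi,\sigma)=S$; $\pi$ and $\tau$ are super-strongly c-Wilf equivalent if $a^\pi_{n,S}=a^\tau_{n,S}$ for all $n$ and all $S$. The overlap set of $\pi\in\mathfrak{S}_m$ is $\mathcal{O}_\pi=\{i\in[m-1]:\operatorname{st}(\pi_{i+1}\cdots\pi_m)=\operatorname{st}(\pi_1\cdots\pi_{m-i})\}$. *)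

theory Defs
  imports Main
begin

definition perms :: "nat \<Rightarrow> nat list set" where
  "perms n = {s. distinct s \<and> set s = {1..n}}"

definition st :: "nat list \<Rightarrow> nat list" where
  "st w = map (\<lambda>x. card {y \<in> set w. y \<le> x}) w"

text \<open>Em(pi, sigma), positions 1-indexed: i in [n-m+1] with st(sigma_i ... sigma_(i+m-1)) = pi.\<close>
definition Em :: "nat list \<Rightarrow> nat list \<Rightarrow> nat set" where
  "Em p s = {i. 1 \<le> i \<and> i + length p - 1 \<le> length s \<and>
                 st (take (length p) (drop (i - 1) s)) = p}"

definition a_count :: "nat list \<Rightarrow> nat \<Rightarrow> nat set \<Rightarrow> nat" where
  "a_count p n S = card {s \<in> perms n. Em p s = S}"

definition super_strongly_cWilf_equiv :: "nat list \<Rightarrow> nat list \<Rightarrow> bool" where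
  "super_strongly_cWilf_equiv p t \<longleftrightarrow> (\<forall>n S. a_count p n S = a_count t n S)"

definition overlap :: "nat list \<Rightarrow> nat set" where
  "overlap p = {i. 1 \<le> i \<and> i \<le> length p - 1 \<and>
                  st (drop i p) = st (take (length p - i) p)}"

end

theory Submission
  imports Defs
begin


definition ordiso :: "nat list \<Rightarrow> nat list \<Rightarrow> bool" where
  "ordiso u v \<longleftrightarrow> length u = length v \<and>
     (\<forall>i<length u. \<forall>j<length u. (u!i < u!j) = (v!i < v!j))"

lemma ordiso_refl: "ordiso u u" by (simp add: ordiso_def)
lemma ordiso_sym: "ordiso u v \<Longrightarrow> ordiso v u" by (simp add: ordiso_def)
lemma ordiso_trans: "ordiso u v \<Longrightarrow> ordiso v w \<Longrightarrow> ordiso u w" by (simp add: ordiso_def)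
lemma ordiso_drop: "ordiso u v \<Longrightarrow> ordiso (drop d u) (drop d v)"
  by (auto simp: ordiso_def)
lemma ordiso_take: "ordiso u v \<Longrightarrow> ordiso (take d u) (take d v)"
  by (auto simp: ordiso_def)

lemma st_length[simp]: "length (st w) = length w" by (simp add: st_def)
lemma st_nth: "i < length w \<Longrightarrow> st w ! i = card {y\<in>set w. y \<le> w!i}"
  by (simp add: st_def)

lemma rank_less_iff:
  fixes V :: "nat set"
  assumes "finite V" "x \<in> V" "y \<in> V"
  shows "(card {z\<in>V. z \<le> x} < card {z\<in>V. z \<le> y}) = (x < y)"
proof
  assume "x < y"
  hence "{z\<in>V. z \<le> x} \<subseteq> {z\<in>V. z \<le> y}" "y \<notin> {z\<in>V. z \<le> x}" "y \<in> {z\<in>V. z \<le> y}"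
    using assms by auto
  hence "{z\<in>V. z \<le> x} \<subset> {z\<in>V. z \<le> y}" by blast
  thus "card {z\<in>V. z \<le> x} < card {z\<in>V. z \<le> y}" using assms by (intro psubset_card_mono) auto
next
  assume h: "card {z\<in>V. z \<le> x} < card {z\<in>V. z \<le> y}"
  show "x < y"
  proof (rule ccontr)
    assume "\<not> x < y"
    hence "{z\<in>V. z \<le> y} \<subseteq> {z\<in>V. z \<le> x}" by auto
    hence "card {z\<in>V. z \<le> y} \<le> card {z\<in>V. z \<le> x}" using assms by (intro card_mono) auto
    thus False using h by simp
  qed
qed

lemma rank_inj:
  fixes V :: "nat set"
  assumes "finite V" "x \<in> V" "y \<in> V" "card {z\<in>V. z \<le> x} = card {z\<in>V. z \<le> y}"
  shows "x = y"
  using rank_less_iff[OF assms(1,2,3)] rank_less_iff[OF assms(1,3,2)] assms(4)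
  by (metis less_irrefl linorder_neqE_nat)

lemma st_less_iff: "i < length w \<Longrightarrow> j < length w \<Longrightarrow> (st w!i < st w!j) = (w!i < w!j)"
  by (simp add: st_nth rank_less_iff)

lemma rank_idx:
  assumes "distinct u" "i < length u"
  shows "card {y\<in>set u. y \<le> u!i} = card {j. j < length u \<and> u!j \<le> u!i}"
proof -
  have "{y\<in>set u. y \<le> u!i} = (!) u ` {j. j < length u \<and> u!j \<le> u!i}"
    by (auto simp: in_set_conv_nth)
  moreover have "inj_on ((!) u) {j. j < length u \<and> u!j \<le> u!i}"
    using assms by (intro inj_on_nth) auto
  ultimately show ?thesis by (simp add: card_image)
qed

lemma st_eq_ordiso:
  assumes "distinct u" "distinct v"
  shows "(st u = st v) = ordiso u v"
proof
  assume h: "st u = st v"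
  hence l: "length u = length v" by (metis st_length)
  show "ordiso u v" unfolding ordiso_def
    using l st_less_iff[of _ u] st_less_iff[of _ v] h by auto
next
  assume h: "ordiso u v"
  hence l: "length u = length v" by (simp add: ordiso_def)
  show "st u = st v"
  proof (rule nth_equalityI)
    show "length (st u) = length (st v)" using l by simp
    fix i assume i: "i < length (st u)"
    have "{j. j < length u \<and> u!j \<le> u!i} = {j. j < length v \<and> v!j \<le> v!i}"
      using h i l unfolding ordiso_def by (auto simp: not_less[symmetric])
    thus "st u ! i = st v ! i" using i l assms by (simp add: st_nth rank_idx)
  qed
qed

lemma perms_distinct: "p \<in> perms m \<Longrightarrow> distinct p" by (simp add: perms_def)
lemma perms_length: "p \<in> perms m \<Longrightarrow> length p = m"
proof -
  assume "p \<in> perms m"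
  hence "distinct p" "set p = {1..m}" by (simp_all add: perms_def)
  hence "card {1..m} = length p" using distinct_card[of p] by simp
  thus "length p = m" by simp
qed
lemma perms_nth: "p \<in> perms m \<Longrightarrow> i < m \<Longrightarrow> p!i \<in> {1..m}"
  using perms_length[of p m] by (auto simp: perms_def)

lemma st_perm: assumes "p \<in> perms m" shows "st p = p"
proof (rule nth_equalityI)
  fix i assume i: "i < length (st p)"
  hence i': "i < m" using perms_length[OF assms] by simp
  have x: "p!i \<in> {1..m}" using perms_nth[OF assms i'] .
  have "{y\<in>set p. y \<le> p!i} = {1..p!i}" using assms x by (auto simp: perms_def)
  thus "st p ! i = p ! i" using i by (simp add: st_nth)
qed simp

lemma st_eq_perm_iff:
  assumes "distinct w" "p \<in> perms m"
  shows "(st w = p) = ordiso w p"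
  using st_eq_ordiso[OF assms(1) perms_distinct[OF assms(2)]] st_perm[OF assms(2)] by simp

definition kth :: "nat set \<Rightarrow> nat \<Rightarrow> nat" where
  "kth V r = sorted_list_of_set V ! r"

lemma kth_in: "finite V \<Longrightarrow> r < card V \<Longrightarrow> kth V r \<in> V"
  unfolding kth_def by (metis length_sorted_list_of_set nth_mem set_sorted_list_of_set)

lemma kth_mono: "finite V \<Longrightarrow> r < s \<Longrightarrow> s < card V \<Longrightarrow> kth V r < kth V s"
  unfolding kth_def
  by (metis length_sorted_list_of_set sorted_wrt_nth_less strict_sorted_list_of_set)

lemma kth_less_iff: "finite V \<Longrightarrow> r < card V \<Longrightarrow> s < card V \<Longrightarrow> (kth V r < kth V s) = (r < s)"
proof (cases r s rule: linorder_cases)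
  case less then show ?thesis if "finite V" "r < card V" "s < card V" using kth_mono that by simp
next
  case equal then show ?thesis if "finite V" "r < card V" "s < card V" by simp
next
  case greater then show ?thesis if "finite V" "r < card V" "s < card V"
    using kth_mono[of V s r] that by simp
qed

lemma kth_inj: "finite V \<Longrightarrow> r < card V \<Longrightarrow> s < card V \<Longrightarrow> (kth V r = kth V s) = (r = s)"
  using kth_less_iff[of V r s] kth_less_iff[of V s r] by (cases r s rule: linorder_cases) auto

lemma kth_surj: "finite V \<Longrightarrow> x \<in> V \<Longrightarrow> \<exists>r<card V. kth V r = x"
  unfolding kth_def by (metis in_set_conv_nth length_sorted_list_of_set set_sorted_list_of_set)

lemma kth_image: "finite V \<Longrightarrow> kth V ` {..<card V} = V"
  using kth_in kth_surj by fastforce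

lemma rank_kth:
  assumes "finite V" "r < card V"
  shows "card {y\<in>V. y \<le> kth V r} = Suc r"
proof -
  have "{y\<in>V. y \<le> kth V r} = kth V ` {..r}"
  proof
    show "{y\<in>V. y \<le> kth V r} \<subseteq> kth V ` {..r}"
    proof
      fix y assume y: "y \<in> {y\<in>V. y \<le> kth V r}"
      then obtain s where s: "s < card V" "kth V s = y" using kth_surj[OF assms(1)] by blast
      hence "s \<le> r" using y kth_mono[OF assms(1), of r s] by (auto simp: not_le[symmetric])
      thus "y \<in> kth V ` {..r}" using s by auto
    qed
    show "kth V ` {..r} \<subseteq> {y\<in>V. y \<le> kth V r}"
    proof
      fix y assume "y \<in> kth V ` {..r}"
      then obtain s where s: "s \<le> r" "y = kth V s" by auto
      have "kth V s \<le> kth V r" using s(1) assms kth_mono[of V s r] by (cases "s = r") auto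
      thus "y \<in> {y\<in>V. y \<le> kth V r}" using s assms kth_in[of V s] by auto
    qed
  qed
  moreover have "inj_on (kth V) {..r}" using assms kth_inj by (auto simp: inj_on_def)
  ultimately show ?thesis by (simp add: card_image)
qed

definition pat :: "nat set \<Rightarrow> nat list \<Rightarrow> nat list" where
  "pat V q = map (\<lambda>r. kth V (r - 1)) q"

lemma pat_length[simp]: "length (pat V q) = length q" by (simp add: pat_def)
lemma pat_nth: "i < length q \<Longrightarrow> pat V q ! i = kth V (q!i - 1)" by (simp add: pat_def)
lemma pat_drop: "drop d (pat V q) = pat V (drop d q)" by (simp add: pat_def drop_map)
lemma pat_take: "take d (pat V q) = pat V (take d q)" by (simp add: pat_def take_map)
lemma pat_set: "set (pat V q) = (\<lambda>r. kth V (r - 1)) ` set q" by (simp add: pat_def)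

lemma pat_ordiso:
  assumes "finite V" "set q \<subseteq> {1..card V}"
  shows "ordiso (pat V q) q"
  unfolding ordiso_def
proof (intro conjI allI impI)
  fix i j assume i: "i < length (pat V q)" and j: "j < length (pat V q)"
  have "q!i \<in> {1..card V}" "q!j \<in> {1..card V}" using i j assms(2) nth_mem by force+
  thus "(pat V q ! i < pat V q ! j) = (q ! i < q ! j)"
    using i j by (auto simp: pat_nth kth_less_iff[OF assms(1)])
qed simp

lemma pat_distinct:
  assumes "finite V" "set q \<subseteq> {1..card V}" "distinct q"
  shows "distinct (pat V q)"
proof -
  have "inj_on (\<lambda>r. kth V (r - 1)) (set q)"
  proof (rule inj_onI)
    fix x y assume x: "x \<in> set q" and y: "y \<in> set q" and e: "kth V (x - 1) = kth V (y - 1)"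
    have "x \<in> {1..card V}" "y \<in> {1..card V}" using x y assms(2) by auto
    hence "x - 1 < card V" "y - 1 < card V" "x \<ge> 1" "y \<ge> 1" by auto
    hence "x - 1 = y - 1" using e kth_inj[OF assms(1)] by blast
    thus "x = y" using \<open>x \<ge> 1\<close> \<open>y \<ge> 1\<close> by simp
  qed
  thus ?thesis using assms(3) by (simp add: pat_def distinct_map)
qed

lemma pat_set_full:
  assumes "finite V" "set q = {1..card V}"
  shows "set (pat V q) = V"
proof -
  have "(\<lambda>r. r - 1) ` {1..card V} = {..<card V}"
  proof
    show "(\<lambda>r. r - 1) ` {1..card V} \<subseteq> {..<card V}" by auto
    show "{..<card V} \<subseteq> (\<lambda>r. r - 1) ` {1..card V}"
    proof
      fix x assume "x \<in> {..<card V}"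
      hence "Suc x \<in> {1..card V}" "x = Suc x - 1" by auto
      thus "x \<in> (\<lambda>r. r - 1) ` {1..card V}" by blast
    qed
  qed
  hence "(\<lambda>r. kth V (r - 1)) ` {1..card V} = kth V ` {..<card V}"
    by (metis image_image)
  thus ?thesis using kth_image[OF assms(1)] assms(2) by (simp add: pat_set)
qed

lemma pattern_pat:
  assumes "distinct w" "st w = p" "p \<in> perms (length w)"
  shows "w = pat (set w) p"
proof (rule nth_equalityI)
  show "length w = length (pat (set w) p)" using perms_length[OF assms(3)] by simp
  fix j assume j: "j < length w"
  have c: "card (set w) = length w" using assms(1) by (simp add: distinct_card)
  obtain s where s: "s < card (set w)" "kth (set w) s = w!j"
    using kth_surj[of "set w" "w!j"] j by auto
  have "p!j = card {y\<in>set w. y \<le> w!j}" using assms(2) j by (auto simp: st_nth)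
  also have "\<dots> = Suc s" using rank_kth[of "set w" s] s by simp
  finally show "w!j = pat (set w) p ! j"
    using s j perms_length[OF assms(3)] by (simp add: pat_nth)
qed

lemma eq_by_set_ordiso:
  assumes "distinct A" "distinct B" "set A = set B" "ordiso A B"
  shows "A = B"
proof -
  have st: "st A = st B" using st_eq_ordiso assms by simp
  have l: "length A = length B" using assms(4) by (simp add: ordiso_def)
  show ?thesis
  proof (rule nth_equalityI)
    fix i assume i: "i < length A"
    have "card {y\<in>set A. y \<le> A!i} = card {y\<in>set A. y \<le> B!i}"
      using st i l assms(3) by (metis st_nth)
    moreover have "A!i \<in> set A" "B!i \<in> set A" using i l assms(3) by (auto simp del: set_conv_nth)
    ultimately show "A!i = B!i" using rank_inj[of "set A" "A!i" "B!i"] by simp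
  qed (rule l)
qed



definition win :: "nat list \<Rightarrow> nat \<Rightarrow> nat \<Rightarrow> nat list" where
  "win s m a = take m (drop a s)"

lemma win_length: "a + m \<le> length s \<Longrightarrow> length (win s m a) = m"
  by (simp add: win_def)
lemma win_nth: "a + m \<le> length s \<Longrightarrow> j < m \<Longrightarrow> win s m a ! j = s ! (a + j)"
  by (simp add: win_def)
lemma win_distinct: "distinct s \<Longrightarrow> distinct (win s m a)"
  by (simp add: win_def)
lemma win_set_sub: "set (win s m a) \<subseteq> set s"
  by (simp add: win_def) (meson in_set_dropD in_set_takeD subsetI)

definition good :: "nat list \<Rightarrow> nat list \<Rightarrow> nat \<Rightarrow> bool" where
  "good p t m \<longleftrightarrow> p \<in> perms m \<and> t \<in> perms m \<and> 1 \<le> m \<and> overlap p = overlap t \<and>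
     (\<forall>i\<in>overlap p. set (take (m - i) p) = set (take (m - i) t) \<and> set (drop i p) = set (drop i t))"

lemma good_sym: "good p t m \<Longrightarrow> good t p m"
  unfolding good_def by metis

lemma consist:
  fixes s p t :: "nat list"
  assumes g: "good p t m"
    and ds: "distinct s" and len: "a + d + m \<le> length s" and d: "0 < d" "d < m"
    and wa: "st (win s m a) = p" and wb: "st (win s m (a+d)) = p"
    and j: "d \<le> j" "j < m"
  shows "kth (set (win s m a)) (t!j - 1) = kth (set (win s m (a+d))) (t!(j-d) - 1)"
proof -
  have pp: "p \<in> perms m" and tp: "t \<in> perms m" and ov: "overlap p = overlap t"
    and sets: "\<forall>i\<in>overlap p. set (take (m - i) p) = set (take (m - i) t) \<and> set (drop i p) = set (drop i t)"
    using g by (auto simp: good_def)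
  define Va where "Va = set (win s m a)"
  define Vb where "Vb = set (win s m (a+d))"
  have la: "length (win s m a) = m" using len by (simp add: win_length)
  have lb: "length (win s m (a+d)) = m" using len by (simp add: win_length)
  have da: "distinct (win s m a)" and db: "distinct (win s m (a+d))" using ds by (simp_all add: win_distinct)
  have fa: "finite Va" and fb: "finite Vb" by (simp_all add: Va_def Vb_def)
  have cVa: "card Va = m" using da la by (simp add: Va_def distinct_card)
  have cVb: "card Vb = m" using db lb by (simp add: Vb_def distinct_card)
  have lp: "length p = m" and lt: "length t = m" using pp tp by (simp_all add: perms_length)
  have pa: "win s m a = pat Va p" using pattern_pat[OF da wa] la pp by (simp add: Va_def)
  have pb: "win s m (a+d) = pat Vb p" using pattern_pat[OF db wb] lb pp by (simp add: Vb_def)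
  have ovl: "drop d (win s m a) = take (m - d) (win s m (a+d))"
  proof (rule nth_equalityI)
    show "length (drop d (win s m a)) = length (take (m - d) (win s m (a+d)))" using la lb by simp
    fix i assume "i < length (drop d (win s m a))"
    hence i: "i < m - d" using la by simp
    have "drop d (win s m a) ! i = win s m a ! (d + i)" using la i by simp
    also have "\<dots> = s ! (a + (d + i))" using len i by (intro win_nth) auto
    also have "\<dots> = win s m (a+d) ! i" using len i by (subst win_nth) (auto simp: add.assoc)
    also have "\<dots> = take (m - d) (win s m (a+d)) ! i" using i by simp
    finally show "drop d (win s m a) ! i = take (m - d) (win s m (a+d)) ! i" .
  qed
  have oa: "ordiso (win s m a) p" using st_eq_perm_iff[OF da pp] wa by simp
  have ob: "ordiso (win s m (a+d)) p" using st_eq_perm_iff[OF db pp] wb by simp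
  have "ordiso (drop d p) (take (m - d) p)"
    using ordiso_trans[OF ordiso_sym[OF ordiso_drop[OF oa, of d]]] ordiso_take[OF ob, of "m - d"] ovl
    by simp
  hence "st (drop d p) = st (take (length p - d) p)"
    using st_eq_ordiso[of "drop d p" "take (m - d) p"] perms_distinct[OF pp] lp by simp
  hence dp: "d \<in> overlap p" using d lp by (simp add: overlap_def)
  hence dt: "d \<in> overlap t" using ov by simp
  hence "st (drop d t) = st (take (m - d) t)" using lt by (simp add: overlap_def)
  hence ot: "ordiso (drop d t) (take (m - d) t)"
    using st_eq_ordiso[of "drop d t" "take (m - d) t"] perms_distinct[OF tp] by simp
  have s1: "set (take (m - d) p) = set (take (m - d) t)" and s2: "set (drop d p) = set (drop d t)"
    using sets dp by auto
  have st_t: "set t = {1..m}" using tp by (simp add: perms_def)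
  have rA: "set (drop d t) \<subseteq> {1..card Va}" using st_t cVa by (metis set_drop_subset)
  have rB: "set (take (m - d) t) \<subseteq> {1..card Vb}" using st_t cVb by (metis set_take_subset)
  define A where "A = pat Va (drop d t)"
  define B where "B = pat Vb (take (m - d) t)"
  have "set A = set (drop d (win s m a))"
    by (simp add: A_def pa pat_drop pat_set s2)
  moreover have "set B = set (take (m - d) (win s m (a+d)))"
    by (simp add: B_def pb pat_take pat_set s1)
  ultimately have sAB: "set A = set B" using ovl by simp
  have oAB: "ordiso A B"
    unfolding A_def B_def
    by (rule ordiso_trans[OF pat_ordiso[OF fa rA] ordiso_trans[OF ot ordiso_sym[OF pat_ordiso[OF fb rB]]]])
  have dA: "distinct A" unfolding A_def using perms_distinct[OF tp] by (intro pat_distinct[OF fa rA]) simp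
  have dB: "distinct B" unfolding B_def using perms_distinct[OF tp] by (intro pat_distinct[OF fb rB]) simp
  have AB: "A = B" by (rule eq_by_set_ordiso[OF dA dB sAB oAB])
  have "A ! (j - d) = kth Va (t!j - 1)" using j lt by (simp add: A_def pat_nth)
  moreover have "B ! (j - d) = kth Vb (t!(j - d) - 1)" using j lt d by (simp add: B_def pat_nth)
  ultimately show ?thesis using AB by (simp add: Va_def Vb_def)
qed

definition cov :: "nat set \<Rightarrow> nat \<Rightarrow> nat \<Rightarrow> nat set" where
  "cov S m x = {k\<in>S. k - 1 \<le> x \<and> x < k - 1 + m}"

definition lk :: "nat set \<Rightarrow> nat \<Rightarrow> nat \<Rightarrow> nat" where
  "lk S m x = (LEAST k. k \<in> cov S m x)"

definition xf :: "nat list \<Rightarrow> nat \<Rightarrow> nat set \<Rightarrow> nat list \<Rightarrow> nat list" where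
  "xf q m S s = map (\<lambda>x. if cov S m x = {} then s!x
       else kth (set (win s m (lk S m x - 1))) (q!(x - (lk S m x - 1)) - 1)) [0..<length s]"

lemma xf_length[simp]: "length (xf q m S s) = length s" by (simp add: xf_def)

lemma xf_nth: "x < length s \<Longrightarrow> xf q m S s ! x = (if cov S m x = {} then s!x
       else kth (set (win s m (lk S m x - 1))) (q!(x - (lk S m x - 1)) - 1))"
  by (simp add: xf_def)

lemma lk_props:
  assumes "cov S m x \<noteq> {}"
  shows "lk S m x \<in> S" "lk S m x - 1 \<le> x" "x < lk S m x - 1 + m" "\<And>k. k \<in> cov S m x \<Longrightarrow> lk S m x \<le> k"
proof -
  obtain k where k: "k \<in> cov S m x" using assms by blast
  have "lk S m x \<in> cov S m x" unfolding lk_def by (rule LeastI[of "\<lambda>k. k \<in> cov S m x", OF k])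
  thus "lk S m x \<in> S" "lk S m x - 1 \<le> x" "x < lk S m x - 1 + m" by (auto simp: cov_def)
  show "\<And>k. k \<in> cov S m x \<Longrightarrow> lk S m x \<le> k" unfolding lk_def by (rule Least_le)
qed

lemma Em_iff:
  assumes "length p = m"
  shows "k \<in> Em p s \<longleftrightarrow> 1 \<le> k \<and> k - 1 + m \<le> length s \<and> st (win s m (k - 1)) = p"
  using assms by (auto simp: Em_def win_def)

lemma Em_D: "length p = m \<Longrightarrow> k \<in> Em p s \<Longrightarrow> 1 \<le> k \<and> k - 1 + m \<le> length s \<and> st (win s m (k - 1)) = p"
  using Em_iff by blast

lemma xf_win:
  assumes g: "good p t m" and sp: "s \<in> perms n" and SE: "S \<subseteq> Em p s" and k: "k \<in> S" and j: "j < m"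
  shows "xf t m S s ! (k - 1 + j) = kth (set (win s m (k - 1))) (t!j - 1)"
proof -
  have pp: "p \<in> perms m" and m1: "1 \<le> m" using g by (auto simp: good_def)
  have lp: "length p = m" using pp by (simp add: perms_length)
  have ls: "length s = n" using sp by (simp add: perms_length)
  have ds: "distinct s" using sp by (simp add: perms_def)
  have kE: "1 \<le> k" "k - 1 + m \<le> n" "st (win s m (k - 1)) = p"
  proof -
    have "k \<in> Em p s" using SE k by blast
    thus "1 \<le> k" "k - 1 + m \<le> n" "st (win s m (k - 1)) = p" using Em_D[OF lp, of k s] ls by auto
  qed
  define x where "x = k - 1 + j"
  have xn: "x < n" using kE j by (simp add: x_def)
  have kc: "k \<in> cov S m x" using k j kE by (auto simp: cov_def x_def)
  hence ne: "cov S m x \<noteq> {}" by blast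
  define k0 where "k0 = lk S m x"
  have k0: "k0 \<in> S" "k0 - 1 \<le> x" "x < k0 - 1 + m" "k0 \<le> k"
    using lk_props[OF ne] kc by (auto simp: k0_def)
  have k0E: "1 \<le> k0" "k0 - 1 + m \<le> n" "st (win s m (k0 - 1)) = p"
  proof -
    have "k0 \<in> Em p s" using SE k0(1) by blast
    thus "1 \<le> k0" "k0 - 1 + m \<le> n" "st (win s m (k0 - 1)) = p" using Em_D[OF lp, of k0 s] ls by auto
  qed
  have val: "xf t m S s ! x = kth (set (win s m (k0 - 1))) (t!(x - (k0 - 1)) - 1)"
    using xn ls ne by (simp add: xf_nth k0_def)
  show ?thesis
  proof (cases "k0 = k")
    case True
    thus ?thesis using val by (simp add: x_def)
  next
    case False
    define d where "d = k - k0"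
    have d: "0 < d" "d < m" using False k0 kE k0E by (auto simp: d_def x_def)
    have ad: "k0 - 1 + d = k - 1" using k0 k0E kE by (simp add: d_def)
    have "kth (set (win s m (k0 - 1))) (t!(x - (k0 - 1)) - 1)
        = kth (set (win s m (k0 - 1 + d))) (t!(x - (k0 - 1) - d) - 1)"
    proof (rule consist[OF g ds _ d k0E(3)])
      show "k0 - 1 + d + m \<le> length s" using ad kE ls by simp
      show "st (win s m (k0 - 1 + d)) = p" using ad kE by simp
      show "d \<le> x - (k0 - 1)" using ad unfolding x_def by linarith
      show "x - (k0 - 1) < m" using k0(2,3) by linarith
    qed
    moreover have "x - (k0 - 1) - d = j" using ad k0 by (simp add: x_def)
    ultimately show ?thesis using val ad by (simp add: x_def)
  qed
qed

lemma xf_window: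
  assumes g: "good p t m" and sp: "s \<in> perms n" and SE: "S \<subseteq> Em p s" and k: "k \<in> S"
  shows "win (xf t m S s) m (k - 1) = pat (set (win s m (k - 1))) t"
proof -
  have pp: "p \<in> perms m" and tp: "t \<in> perms m" using g by (auto simp: good_def)
  have lp: "length p = m" using pp by (simp add: perms_length)
  have lt: "length t = m" using tp by (simp add: perms_length)
  have ls: "length s = n" using sp by (simp add: perms_length)
  have "k \<in> Em p s" using SE k by blast
  hence kE: "1 \<le> k" "k - 1 + m \<le> n" using Em_D[OF lp, of k s] ls by auto
  show ?thesis
  proof (rule nth_equalityI)
    show "length (win (xf t m S s) m (k - 1)) = length (pat (set (win s m (k - 1))) t)"
      using kE ls lt by (simp add: win_length)
    fix j assume "j < length (win (xf t m S s) m (k - 1))"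
    hence j: "j < m" using kE ls by (simp add: win_length)
    have "win (xf t m S s) m (k - 1) ! j = xf t m S s ! (k - 1 + j)"
      using kE ls j by (simp add: win_nth)
    also have "\<dots> = kth (set (win s m (k - 1))) (t!j - 1)" by (rule xf_win[OF g sp SE k j])
    also have "\<dots> = pat (set (win s m (k - 1))) t ! j" using j lt by (simp add: pat_nth)
    finally show "win (xf t m S s) m (k - 1) ! j = pat (set (win s m (k - 1))) t ! j" .
  qed
qed

lemma xf_window_set:
  assumes g: "good p t m" and sp: "s \<in> perms n" and SE: "S \<subseteq> Em p s" and k: "k \<in> S"
  shows "set (win (xf t m S s) m (k - 1)) = set (win s m (k - 1))"
    and "st (win (xf t m S s) m (k - 1)) = t"
proof -
  have pp: "p \<in> perms m" and tp: "t \<in> perms m" using g by (auto simp: good_def)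
  have lp: "length p = m" using pp by (simp add: perms_length)
  have ls: "length s = n" using sp by (simp add: perms_length)
  have "k \<in> Em p s" using SE k by blast
  hence kE: "1 \<le> k" "k - 1 + m \<le> n" using Em_D[OF lp, of k s] ls by auto
  define V where "V = set (win s m (k - 1))"
  have ds: "distinct s" using sp by (simp add: perms_def)
  have dw: "distinct (win s m (k - 1))" using ds by (rule win_distinct)
  have lw: "length (win s m (k - 1)) = m" using kE ls by (simp add: win_length)
  have cV: "card V = m" unfolding V_def using distinct_card[OF dw] lw by simp
  have fV: "finite V" by (simp add: V_def)
  have stt: "set t = {1..card V}" using tp cV by (simp add: perms_def)
  have stt': "set t \<subseteq> {1..card V}" using stt by simp
  show "set (win (xf t m S s) m (k - 1)) = set (win s m (k - 1))"
    using xf_window[OF assms] pat_set_full[OF fV stt] by (simp add: V_def)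
  have dpt: "distinct (pat V t)" by (rule pat_distinct[OF fV stt' perms_distinct[OF tp]])
  have "st (pat V t) = t"
    using st_eq_perm_iff[OF dpt tp] pat_ordiso[OF fV stt'] by simp
  thus "st (win (xf t m S s) m (k - 1)) = t" using xf_window[OF assms] by (simp add: V_def)
qed

lemma xf_Em:
  assumes g: "good p t m" and sp: "s \<in> perms n" and SE: "S \<subseteq> Em p s"
  shows "S \<subseteq> Em t (xf t m S s)"
proof
  fix k assume k: "k \<in> S"
  have pp: "p \<in> perms m" and tp: "t \<in> perms m" using g by (auto simp: good_def)
  have lp: "length p = m" using pp by (simp add: perms_length)
  have lt: "length t = m" using tp by (simp add: perms_length)
  have ls: "length s = n" using sp by (simp add: perms_length)
  have "k \<in> Em p s" using SE k by blast
  hence kE: "1 \<le> k" "k - 1 + m \<le> n" using Em_D[OF lp, of k s] ls by auto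
  show "k \<in> Em t (xf t m S s)"
    using Em_iff[OF lt] kE ls xf_window_set(2)[OF assms k] by simp
qed

lemma xf_cover_mem:
  assumes g: "good p t m" and sp: "s \<in> perms n" and SE: "S \<subseteq> Em p s"
    and x: "x < n" and ne: "cov S m x \<noteq> {}"
  shows "xf t m S s ! x \<in> set (win s m (lk S m x - 1))" "s ! x \<in> set (win s m (lk S m x - 1))"
    "x - (lk S m x - 1) < m"
proof -
  have pp: "p \<in> perms m" using g by (auto simp: good_def)
  have lp: "length p = m" using pp by (simp add: perms_length)
  have ls: "length s = n" using sp by (simp add: perms_length)
  define k0 where "k0 = lk S m x"
  have k0: "k0 \<in> S" "k0 - 1 \<le> x" "x < k0 - 1 + m"
    using lk_props[OF ne] by (auto simp: k0_def)
  have "k0 \<in> Em p s" using SE k0 by blast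
  hence kE: "1 \<le> k0" "k0 - 1 + m \<le> n" using Em_D[OF lp, of k0 s] ls by auto
  have i: "x - (k0 - 1) < m" using k0 by simp
  show "x - (lk S m x - 1) < m" using i by (simp add: k0_def)
  have "xf t m S s ! x = win (xf t m S s) m (k0 - 1) ! (x - (k0 - 1))"
    using i kE ls k0 by (simp add: win_nth)
  also have "\<dots> \<in> set (win (xf t m S s) m (k0 - 1))"
    using i kE ls by (simp add: win_length)
  finally show "xf t m S s ! x \<in> set (win s m (lk S m x - 1))"
    using xf_window_set(1)[OF g sp SE k0(1)] by (simp add: k0_def)
  have "s ! x = win s m (k0 - 1) ! (x - (k0 - 1))"
    using i kE ls k0 by (simp add: win_nth)
  also have "\<dots> \<in> set (win s m (k0 - 1))"
    using i kE ls by (simp add: win_length)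
  finally show "s ! x \<in> set (win s m (lk S m x - 1))" by (simp add: k0_def)
qed

lemma xf_perms:
  assumes g: "good p t m" and sp: "s \<in> perms n" and SE: "S \<subseteq> Em p s"
  shows "xf t m S s \<in> perms n"
proof -
  have ls: "length s = n" using sp by (simp add: perms_length)
  have sub1: "set (xf t m S s) \<subseteq> set s"
  proof
    fix y assume "y \<in> set (xf t m S s)"
    then obtain x where x: "x < n" "y = xf t m S s ! x" using ls by (auto simp: in_set_conv_nth)
    show "y \<in> set s"
    proof (cases "cov S m x = {}")
      case True thus ?thesis using x ls by (simp add: xf_nth)
    next
      case False thus ?thesis using xf_cover_mem(1)[OF g sp SE x(1) False] x win_set_sub by blast
    qed
  qed
  have sub2: "set s \<subseteq> set (xf t m S s)"
  proof
    fix y assume "y \<in> set s"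
    then obtain x where x: "x < n" "y = s ! x" using ls by (auto simp: in_set_conv_nth)
    show "y \<in> set (xf t m S s)"
    proof (cases "cov S m x = {}")
      case True thus ?thesis using x ls by (auto simp: xf_nth in_set_conv_nth intro!: exI[of _ x])
    next
      case False
      define k0 where "k0 = lk S m x"
      have "k0 \<in> S" using lk_props[OF False] by (simp add: k0_def)
      thus ?thesis using xf_cover_mem(2)[OF g sp SE x(1) False] x xf_window_set(1)[OF g sp SE]
        win_set_sub[of "xf t m S s" m "k0 - 1"] by (auto simp: k0_def)
    qed
  qed
  have se: "set (xf t m S s) = {1..n}" using sub1 sub2 sp by (auto simp: perms_def)
  hence "distinct (xf t m S s)" using ls by (intro card_distinct) simp
  thus ?thesis using se by (simp add: perms_def)
qed

lemma xf_inv: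
  assumes g: "good p t m" and sp: "s \<in> perms n" and SE: "S \<subseteq> Em p s"
  shows "xf p m S (xf t m S s) = s"
proof (rule nth_equalityI)
  have pp: "p \<in> perms m" using g by (auto simp: good_def)
  have lp: "length p = m" using pp by (simp add: perms_length)
  have ls: "length s = n" using sp by (simp add: perms_length)
  show "length (xf p m S (xf t m S s)) = length s" by simp
  fix x assume "x < length (xf p m S (xf t m S s))"
  hence x: "x < n" using ls by simp
  show "xf p m S (xf t m S s) ! x = s ! x"
  proof (cases "cov S m x = {}")
    case True thus ?thesis using x ls by (simp add: xf_nth)
  next
    case False
    define k0 where "k0 = lk S m x"
    have k0: "k0 \<in> S" "k0 - 1 \<le> x" "x < k0 - 1 + m"
      using lk_props[OF False] by (auto simp: k0_def)
    have kE: "1 \<le> k0" "k0 - 1 + m \<le> n" "st (win s m (k0 - 1)) = p"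
    proof -
      have "k0 \<in> Em p s" using SE k0(1) by blast
      thus "1 \<le> k0" "k0 - 1 + m \<le> n" "st (win s m (k0 - 1)) = p" using Em_D[OF lp, of k0 s] ls by auto
    qed
    have ds: "distinct s" using sp by (simp add: perms_def)
    have pw: "win s m (k0 - 1) = pat (set (win s m (k0 - 1))) p"
      using pattern_pat[OF win_distinct[OF ds] kE(3)] pp kE ls by (simp add: win_length)
    have i: "x - (k0 - 1) < m" using k0 by simp
    have "xf p m S (xf t m S s) ! x = kth (set (win s m (k0 - 1))) (p!(x - (k0 - 1)) - 1)"
      using x ls False xf_window_set(1)[OF g sp SE k0(1)] by (simp add: xf_nth k0_def)
    also have "\<dots> = pat (set (win s m (k0 - 1))) p ! (x - (k0 - 1))" using i lp by (simp add: pat_nth)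
    also have "\<dots> = win s m (k0 - 1) ! (x - (k0 - 1))" using pw by simp
    also have "\<dots> = s ! x" using i kE ls k0 by (simp add: win_nth)
    finally show ?thesis .
  qed
qed

lemma b_eq:
  assumes g: "good p t m"
  shows "card {s\<in>perms n. S \<subseteq> Em p s} = card {s\<in>perms n. S \<subseteq> Em t s}"
proof -
  have g': "good t p m" using good_sym[OF g] .
  have "bij_betw (xf t m S) {s\<in>perms n. S \<subseteq> Em p s} {s\<in>perms n. S \<subseteq> Em t s}"
  proof (rule bij_betw_byWitness[where f'="xf p m S"])
    show "\<forall>a\<in>{s\<in>perms n. S \<subseteq> Em p s}. xf p m S (xf t m S a) = a" using xf_inv[OF g] by blast
    show "\<forall>a\<in>{s\<in>perms n. S \<subseteq> Em t s}. xf t m S (xf p m S a) = a" using xf_inv[OF g'] by blast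
    show "xf t m S ` {s\<in>perms n. S \<subseteq> Em p s} \<subseteq> {s\<in>perms n. S \<subseteq> Em t s}"
      using xf_perms[OF g] xf_Em[OF g] by blast
    show "xf p m S ` {s\<in>perms n. S \<subseteq> Em t s} \<subseteq> {s\<in>perms n. S \<subseteq> Em p s}"
      using xf_perms[OF g'] xf_Em[OF g'] by blast
  qed
  thus ?thesis by (rule bij_betw_same_card)
qed

lemma count_from_super:
  fixes f :: "'a \<Rightarrow> 'b set" and g :: "'c \<Rightarrow> 'b set"
  assumes U: "finite U" and X: "finite X" and Y: "finite Y"
    and fU: "\<forall>x\<in>X. f x \<subseteq> U" and gU: "\<forall>y\<in>Y. g y \<subseteq> U"
    and b: "\<forall>S. card {x\<in>X. S \<subseteq> f x} = card {y\<in>Y. S \<subseteq> g y}"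
  shows "card {x\<in>X. f x = S} = card {y\<in>Y. g y = S}"
proof (cases "S \<subseteq> U")
  case False
  hence e: "{x\<in>X. f x = S} = {}" "{y\<in>Y. g y = S} = {}" using fU gU by auto
  show ?thesis by (simp only: e card.empty)
next
  case True
  have sumf: "card {x\<in>X. T \<subseteq> f x} = (\<Sum>R\<in>{R. T \<subseteq> R \<and> R \<subseteq> U}. card {x\<in>X. f x = R})"
    if "T \<subseteq> U" "\<forall>x\<in>X. f x \<subseteq> U" "finite X" for T and f :: "'d \<Rightarrow> 'b set" and X :: "'d set"
  proof -
    note fU = that(2) and X = that(3)
    have "{x\<in>X. T \<subseteq> f x} = (\<Union>R\<in>{R. T \<subseteq> R \<and> R \<subseteq> U}. {x\<in>X. f x = R})"
      using fU by auto
    moreover have "finite {R. T \<subseteq> R \<and> R \<subseteq> U}"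
      using U by (rule finite_subset[rotated, OF finite_Pow_iff[THEN iffD2]]) auto
    ultimately show ?thesis
      using X by (simp add: card_UN_disjoint disjoint_iff)
  qed
  show ?thesis using True
  proof (induction "card (U - S)" arbitrary: S rule: less_induct)
    case less
    define B where "B = {R. S \<subseteq> R \<and> R \<subseteq> U}"
    have fB: "finite B" unfolding B_def
      using U by (rule finite_subset[rotated, OF finite_Pow_iff[THEN iffD2]]) auto
    have SB: "S \<in> B" using less.prems by (simp add: B_def)
    have IH: "card {x\<in>X. f x = R} = card {y\<in>Y. g y = R}" if "R \<in> B - {S}" for R
    proof -
      have R: "S \<subset> R" "R \<subseteq> U" using that by (auto simp: B_def)
      have "U - R \<subset> U - S" using R by blast
      hence "card (U - R) < card (U - S)" using U by (intro psubset_card_mono) auto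
      thus ?thesis using less.hyps R by blast
    qed
    have "card {x\<in>X. S \<subseteq> f x} = card {x\<in>X. f x = S} + (\<Sum>R\<in>B - {S}. card {x\<in>X. f x = R})"
      using sumf[OF less.prems fU X] fB SB by (simp add: B_def[symmetric] sum.remove)
    moreover have "card {y\<in>Y. S \<subseteq> g y} = card {y\<in>Y. g y = S} + (\<Sum>R\<in>B - {S}. card {y\<in>Y. g y = R})"
      using sumf[OF less.prems gU Y] fB SB by (simp add: B_def[symmetric] sum.remove)
    moreover have "(\<Sum>R\<in>B - {S}. card {x\<in>X. f x = R}) = (\<Sum>R\<in>B - {S}. card {y\<in>Y. g y = R})"
      using IH by (rule sum.cong[OF refl])
    ultimately show ?case using b by simp
  qed
qed

lemma finite_perms: "finite (perms n)"
proof -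
  have "perms n \<subseteq> {xs. set xs \<subseteq> {1..n} \<and> length xs = n}"
    using perms_length by (auto simp: perms_def)
  thus ?thesis by (rule finite_subset) (rule finite_lists_length_eq, simp)
qed

lemma Em_sub: "1 \<le> length p \<Longrightarrow> s \<in> perms n \<Longrightarrow> Em p s \<subseteq> {1..n}"
  using perms_length[of s n] by (auto simp: Em_def)

theorem theorem1p11:
  fixes p t :: "nat list" and m :: nat
  assumes "p \<in> perms m" and "t \<in> perms m"
    and "overlap p = overlap t"
    and "\<forall>i \<in> overlap p. set (take (m - i) p) = set (take (m - i) t)
                          \<and> set (drop i p) = set (drop i t)"
  shows "super_strongly_cWilf_equiv p t"
proof (cases "m = 0")
  case True
  hence "p = []" "t = []" using assms(1,2) by (simp_all add: perms_def)
  thus ?thesis by (simp add: super_strongly_cWilf_equiv_def)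
next
  case False
  hence g: "good p t m" using assms by (simp add: good_def)
  have lp: "length p = m" "length t = m" using assms(1,2) by (simp_all add: perms_length)
  show ?thesis unfolding super_strongly_cWilf_equiv_def a_count_def
  proof (intro allI)
    fix n S
    show "card {s\<in>perms n. Em p s = S} = card {s\<in>perms n. Em t s = S}"
      by (rule count_from_super[where U="{1..n}"])
        (use finite_perms Em_sub lp False b_eq[OF g] in auto)
  qed
qed

end
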